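(* Let $\Pi$ be an $n$-dimensional linear space satisfying the exchange axiom and the axiom (P2), let $0<k<n-1$, let $B=\{p_1,\dots,p_{n+1}\}$ be a base of $\Pi$, and let $\mathcal{B}_k$ be the base subset of $\mathcal{G}_k(\Pi)$ associated with $B$. A subset $\mathcal{R}\subset\mathcal{B}_k$ is exact if and only if $S_i(\mathcal{R})=\{p_i\}$ for every $i\in\{1,\dots,n+1\}$.
   Context: A linear space $\Pi=(P,\mathcal{L})$ is a set $P$ of points with a family $\mathcal{L}$ of proper subsets (lines) such that each line has at least two points and any two distinct points $p,q$ lie on exactly one line $pq$. A subspace is a set $S\subset P$ with $pq\subset S$ for all distinct $p,q\in S$; $\overline{X}$ is the smallest subspace containing $X$. A set $X$ is independent if $\overline{X}$ is not spanned by a proper subset of $X$; a base of $\Pi$ is an independent set spanning $P$. A subspace is $m$-dimensional if $m+1$ is the smallest number of points spanning it. Exchange axiom: for every $X\subset P$ and $p_1,p_2\in P\setminus\overline{X}$, $p_2\in\overline{X\cup\{p_1\}}$ implies $p_1\in\overline{X\cup\{p_2\}}$. Axiom (P2): every line has at least three points. $\mathcal{G}_k(\Pi)$ is the set of $k$-dimensional subspaces; the base subset of $\mathcal{G}_k(\Pi)$ associated with a base $B$ is the set of all $k$-dimensional subspaces spanned by points of $B$. A subset $\mathcal{R}\subset\mathcal{B}_k$ is exact if $\mathcal{B}_k$ is the unique base subset of $\mathcal{G}_k(\Pi)$ containing $\mathcal{R}$, and inexact otherwise. $S_i(\mathcal{R})$ denotes the intersection of all elements of $\mathcal{R}$ containing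 $p_i$ (the intersection of the empty family being $P$). *)

theory Defs
  imports Main
begin

definition linear_space :: "'p set \<Rightarrow> 'p set set \<Rightarrow> bool" where
  "linear_space P L \<longleftrightarrow>
     (\<forall>l\<in>L. l \<subseteq> P \<and> l \<noteq> P \<and> (\<exists>a b. a \<in> l \<and> b \<in> l \<and> a \<noteq> b)) \<and>
     (\<forall>p\<in>P. \<forall>q\<in>P. p \<noteq> q \<longrightarrow> (\<exists>!l. l \<in> L \<and> p \<in> l \<and> q \<in> l))"

definition line_through :: "'p set set \<Rightarrow> 'p \<Rightarrow> 'p \<Rightarrow> 'p set" where
  "line_through L p q = (THE l. l \<in> L \<and> p \<in> l \<and> q \<in> l)"

definition subspace :: "'p set \<Rightarrow> 'p set set \<Rightarrow> 'p set \<Rightarrow> bool" where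
  "subspace P L S \<longleftrightarrow> S \<subseteq> P \<and>
     (\<forall>p\<in>S. \<forall>q\<in>S. p \<noteq> q \<longrightarrow> line_through L p q \<subseteq> S)"

definition span_ls :: "'p set \<Rightarrow> 'p set set \<Rightarrow> 'p set \<Rightarrow> 'p set" where
  "span_ls P L X = P \<inter> \<Inter>{S. subspace P L S \<and> X \<subseteq> S}"

definition independent_ls :: "'p set \<Rightarrow> 'p set set \<Rightarrow> 'p set \<Rightarrow> bool" where
  "independent_ls P L X \<longleftrightarrow> X \<subseteq> P \<and> (\<forall>Y. Y \<subset> X \<longrightarrow> span_ls P L Y \<noteq> span_ls P L X)"

definition base_ls :: "'p set \<Rightarrow> 'p set set \<Rightarrow> 'p set \<Rightarrow> bool" where
  "base_ls P L B \<longleftrightarrow> independent_ls P L B \<and> span_ls P L B = P"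

definition has_dim :: "'p set \<Rightarrow> 'p set set \<Rightarrow> 'p set \<Rightarrow> nat \<Rightarrow> bool" where
  "has_dim P L S m \<longleftrightarrow> subspace P L S \<and>
     (\<exists>X. X \<subseteq> P \<and> finite X \<and> card X = m + 1 \<and> span_ls P L X = S) \<and>
     (\<forall>X. X \<subseteq> P \<and> finite X \<and> span_ls P L X = S \<longrightarrow> m + 1 \<le> card X)"

definition exchange_axiom :: "'p set \<Rightarrow> 'p set set \<Rightarrow> bool" where
  "exchange_axiom P L \<longleftrightarrow>
     (\<forall>X p1 p2. X \<subseteq> P \<longrightarrow> p1 \<in> P - span_ls P L X \<longrightarrow> p2 \<in> P - span_ls P L X \<longrightarrow>
        p2 \<in> span_ls P L (X \<union> {p1}) \<longrightarrow> p1 \<in> span_ls P L (X \<union> {p2}))"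

definition axiom_P2 :: "'p set set \<Rightarrow> bool" where
  "axiom_P2 L \<longleftrightarrow> (\<forall>l\<in>L. \<exists>a b c. a \<in> l \<and> b \<in> l \<and> c \<in> l \<and> a \<noteq> b \<and> a \<noteq> c \<and> b \<noteq> c)"

definition grass :: "'p set \<Rightarrow> 'p set set \<Rightarrow> nat \<Rightarrow> 'p set set" where
  "grass P L k = {S. has_dim P L S k}"

definition base_subset :: "'p set \<Rightarrow> 'p set set \<Rightarrow> nat \<Rightarrow> 'p set \<Rightarrow> 'p set set" where
  "base_subset P L k B = {S \<in> grass P L k. \<exists>X. X \<subseteq> B \<and> S = span_ls P L X}"

definition exact :: "'p set \<Rightarrow> 'p set set \<Rightarrow> nat \<Rightarrow> 'p set \<Rightarrow> 'p set set \<Rightarrow> bool" where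
  "exact P L k B R \<longleftrightarrow> R \<subseteq> base_subset P L k B \<and>
     (\<forall>B'. base_ls P L B' \<longrightarrow> R \<subseteq> base_subset P L k B' \<longrightarrow>
        base_subset P L k B' = base_subset P L k B)"

text \<open>S_i(R): intersection of all elements of R containing p (P if there are none).\<close>
definition S_of :: "'p set \<Rightarrow> 'p set set \<Rightarrow> 'p \<Rightarrow> 'p set" where
  "S_of P R p = P \<inter> \<Inter>{S \<in> R. p \<in> S}"

end

theory Submission
  imports Defs
begin

lemma lt_props:
  assumes "linear_space P L" "p \<in> P" "q \<in> P" "p \<noteq> q"
  shows "line_through L p q \<in> L \<and> p \<in> line_through L p q \<and> q \<in> line_through L p q"
proof -
  have "\<forall>p\<in>P. \<forall>q\<in>P. p \<noteq> q \<longrightarrow> (\<exists>!l. l \<in> L \<and> p \<in> l \<and> q \<in> l)"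
    using assms(1) unfolding linear_space_def by (rule conjunct2)
  then have "\<exists>!l. l \<in> L \<and> p \<in> l \<and> q \<in> l" using assms(2-4) by blast
  then show ?thesis unfolding line_through_def by (rule theI')
qed

lemma lt_eq:
  assumes "linear_space P L" "l \<in> L" "p \<in> l" "q \<in> l" "p \<noteq> q"
  shows "line_through L p q = l"
proof -
  have "\<forall>l\<in>L. l \<subseteq> P \<and> l \<noteq> P \<and> (\<exists>a b. a \<in> l \<and> b \<in> l \<and> a \<noteq> b)"
    using assms(1) unfolding linear_space_def by (rule conjunct1)
  then have lP: "l \<subseteq> P" using assms(2) by blast
  have "\<forall>p\<in>P. \<forall>q\<in>P. p \<noteq> q \<longrightarrow> (\<exists>!l. l \<in> L \<and> p \<in> l \<and> q \<in> l)"
    using assms(1) unfolding linear_space_def by (rule conjunct2)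
  then have "\<exists>!l. l \<in> L \<and> p \<in> l \<and> q \<in> l" using assms(3-5) lP by blast
  then show ?thesis unfolding line_through_def using assms(2-4) by (intro the1_equality) blast+
qed

lemma lt_subP:
  assumes "linear_space P L" "p \<in> P" "q \<in> P" "p \<noteq> q"
  shows "line_through L p q \<subseteq> P"
proof -
  have "\<forall>l\<in>L. l \<subseteq> P \<and> l \<noteq> P \<and> (\<exists>a b. a \<in> l \<and> b \<in> l \<and> a \<noteq> b)"
    using assms(1) unfolding linear_space_def by (rule conjunct1)
  then show ?thesis using lt_props[OF assms] by blast
qed

lemma span_subP: "span_ls P L X \<subseteq> P"
  unfolding span_ls_def by blast

lemma span_least: "subspace P L S \<Longrightarrow> X \<subseteq> S \<Longrightarrow> span_ls P L X \<subseteq> S"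
  unfolding span_ls_def by blast

lemma span_inc: "X \<subseteq> P \<Longrightarrow> X \<subseteq> span_ls P L X"
  unfolding span_ls_def by blast

lemma span_mono: "X \<subseteq> Y \<Longrightarrow> span_ls P L X \<subseteq> span_ls P L Y"
  unfolding span_ls_def by blast

lemma span_subspace:
  assumes "linear_space P L"
  shows "subspace P L (span_ls P L X)"
  unfolding subspace_def
proof (intro conjI ballI impI)
  show "span_ls P L X \<subseteq> P" by (rule span_subP)
next
  fix p q assume pq: "p \<in> span_ls P L X" "q \<in> span_ls P L X" "p \<noteq> q"
  have lP: "line_through L p q \<subseteq> P"
    using lt_subP[OF assms, of p q] pq span_subP[of P L X] by (meson subsetD)
  have A: "line_through L p q \<subseteq> S" if S: "subspace P L S" "X \<subseteq> S" for S
  proof -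
    have "span_ls P L X \<subseteq> S" using span_least[OF S] .
    then have "p \<in> S" "q \<in> S" using pq(1,2) by (meson subsetD)+
    moreover have "\<forall>p\<in>S. \<forall>q\<in>S. p \<noteq> q \<longrightarrow> line_through L p q \<subseteq> S"
      using S(1) unfolding subspace_def by (rule conjunct2)
    ultimately show ?thesis using pq(3) by blast
  qed
  have "line_through L p q \<subseteq> \<Inter>{S. subspace P L S \<and> X \<subseteq> S}"
  proof (rule Inter_greatest)
    fix S assume "S \<in> {S. subspace P L S \<and> X \<subseteq> S}"
    then show "line_through L p q \<subseteq> S" using A by simp
  qed
  then show "line_through L p q \<subseteq> span_ls P L X" unfolding span_ls_def using lP by (rule Int_greatest[rotated])
qed

lemma span_sub_span:
  assumes "linear_space P L" "X \<subseteq> span_ls P L Y"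
  shows "span_ls P L X \<subseteq> span_ls P L Y"
  using span_least[OF span_subspace[OF assms(1)] assms(2)] .

lemma span_empty: "span_ls P L {} = {}"
proof -
  have "subspace P L {}" unfolding subspace_def by blast
  then show ?thesis using span_least[of P L "{}" "{}"] by blast
qed

lemma span_single: "p \<in> P \<Longrightarrow> span_ls P L {p} = {p}"
proof -
  assume "p \<in> P"
  then have "subspace P L {p}" unfolding subspace_def by blast
  then show ?thesis using span_least[of P L "{p}" "{p}"] span_inc[of "{p}" P L] \<open>p \<in> P\<close> by blast
qed

lemma span_finitary:
  assumes "linear_space P L" "X \<subseteq> P" "q \<in> span_ls P L X"
  shows "\<exists>X0. X0 \<subseteq> X \<and> finite X0 \<and> q \<in> span_ls P L X0"
proof -
  define U where "U = {x. \<exists>X0. X0 \<subseteq> X \<and> finite X0 \<and> x \<in> span_ls P L X0}"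
  have "subspace P L U" unfolding subspace_def
  proof (intro conjI ballI impI)
    show "U \<subseteq> P"
    proof
      fix x assume "x \<in> U"
      then obtain X0 where "x \<in> span_ls P L X0" unfolding U_def by blast
      then show "x \<in> P" using span_subP[of P L X0] by (meson subsetD)
    qed
  next
    fix a b assume ab: "a \<in> U" "b \<in> U" "a \<noteq> b"
    obtain X1 where X1: "X1 \<subseteq> X" "finite X1" "a \<in> span_ls P L X1" using ab(1) unfolding U_def by blast
    obtain X2 where X2: "X2 \<subseteq> X" "finite X2" "b \<in> span_ls P L X2" using ab(2) unfolding U_def by blast
    have "span_ls P L X1 \<subseteq> span_ls P L (X1 \<union> X2)" by (rule span_mono) (rule Un_upper1)
    then have a': "a \<in> span_ls P L (X1 \<union> X2)" using X1(3) by (meson subsetD)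
    have "span_ls P L X2 \<subseteq> span_ls P L (X1 \<union> X2)" by (rule span_mono) (rule Un_upper2)
    then have b': "b \<in> span_ls P L (X1 \<union> X2)" using X2(3) by (meson subsetD)
    have "\<forall>p\<in>span_ls P L (X1 \<union> X2). \<forall>q\<in>span_ls P L (X1 \<union> X2). p \<noteq> q \<longrightarrow>
        line_through L p q \<subseteq> span_ls P L (X1 \<union> X2)"
      using span_subspace[OF assms(1)] unfolding subspace_def by (rule conjunct2)
    then have lin: "line_through L a b \<subseteq> span_ls P L (X1 \<union> X2)" using a' b' ab(3) by blast
    have "X1 \<union> X2 \<subseteq> X" "finite (X1 \<union> X2)" using X1 X2 by auto
    then show "line_through L a b \<subseteq> U" using lin unfolding U_def by blast
  qed
  moreover have "X \<subseteq> U"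
  proof
    fix x assume "x \<in> X"
    then have "x \<in> span_ls P L {x}" using span_single[of x P L] assms(2) by blast
    moreover have "{x} \<subseteq> X" "finite {x}" using \<open>x \<in> X\<close> by auto
    ultimately show "x \<in> U" unfolding U_def by blast
  qed
  ultimately have "span_ls P L X \<subseteq> U" by (rule span_least)
  then show ?thesis using assms(3) unfolding U_def by blast
qed

lemma indep_notin:
  assumes "independent_ls P L I" "x \<in> I"
  shows "x \<notin> span_ls P L (I - {x})"
proof
  assume a: "x \<in> span_ls P L (I - {x})"
  have IP: "I \<subseteq> P" using assms(1) unfolding independent_ls_def by blast
  have "I \<subseteq> span_ls P L (I - {x})" using a span_inc[of "I - {x}" P L] IP by blast
  hence "span_ls P L I \<subseteq> span_ls P L (I - {x})"
    unfolding span_ls_def by blast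
  moreover have "span_ls P L (I - {x}) \<subseteq> span_ls P L I" by (rule span_mono) blast
  ultimately have "span_ls P L (I - {x}) = span_ls P L I" by blast
  moreover have "I - {x} \<subset> I" using assms(2) by blast
  ultimately show False using assms(1) unfolding independent_ls_def by blast
qed

lemma indep_mem:
  assumes "independent_ls P L I" "X \<subseteq> I" "x \<in> I" "x \<in> span_ls P L X"
  shows "x \<in> X"
proof (rule ccontr)
  assume "x \<notin> X"
  then have "X \<subseteq> I - {x}" using assms by blast
  then show False using indep_notin[OF assms(1,3)] span_mono[of X "I - {x}" P L] assms(4) by blast
qed

lemma indep_intro:
  assumes "I \<subseteq> P" "\<And>x. x \<in> I \<Longrightarrow> x \<notin> span_ls P L (I - {x})"
  shows "independent_ls P L I"
  unfolding independent_ls_def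
proof (intro conjI allI impI)
  show "I \<subseteq> P" by fact
  fix Y assume "Y \<subset> I"
  then obtain x where x: "x \<in> I" "x \<notin> Y" by blast
  have "span_ls P L Y \<subseteq> span_ls P L (I - {x})" using x \<open>Y \<subset> I\<close> by (intro span_mono) blast
  moreover have "x \<in> span_ls P L I" using span_inc[OF assms(1)] x by blast
  ultimately show "span_ls P L Y \<noteq> span_ls P L I" using assms(2)[OF x(1)] by blast
qed

lemma line_in_span:
  assumes ls: "linear_space P L" and "a \<in> P" "b \<in> P" "a \<noteq> b"
  shows "line_through L a b \<subseteq> span_ls P L {a, b}"
proof -
  have ab: "a \<in> span_ls P L {a, b}" "b \<in> span_ls P L {a, b}"
    using span_inc[of "{a,b}" P L] assms by auto
  have "\<forall>p\<in>span_ls P L {a, b}. \<forall>q\<in>span_ls P L {a, b}. p \<noteq> q \<longrightarrow>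
        line_through L p q \<subseteq> span_ls P L {a, b}"
    using span_subspace[OF ls] unfolding subspace_def by (rule conjunct2)
  then show ?thesis using ab assms(4) by blast
qed

lemma exch_rule:
  assumes "exchange_axiom P L" "X \<subseteq> P" "p1 \<in> P" "p1 \<notin> span_ls P L X"
    "p2 \<in> P" "p2 \<notin> span_ls P L X" "p2 \<in> span_ls P L (X \<union> {p1})"
  shows "p1 \<in> span_ls P L (X \<union> {p2})"
  using assms unfolding exchange_axiom_def by blast


lemma inter_aux:
  assumes ls: "linear_space P L" and ex: "exchange_axiom P L"
    and I: "independent_ls P L I" and fin: "finite D"
    and AY: "A \<subseteq> Y" and YI: "Y \<subseteq> I"
  shows "D \<inter> Y = {} \<Longrightarrow> D \<subseteq> I \<Longrightarrow>
    span_ls P L (A \<union> D) \<inter> span_ls P L Y \<subseteq> span_ls P L A"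
  using fin
proof (induction D rule: finite_induct)
  case empty
  then show ?case by simp
next
  case (insert x D)
  have IP: "I \<subseteq> P" using I unfolding independent_ls_def by blast
  have DY: "D \<inter> Y = {}" and DI: "D \<subseteq> I" and xY: "x \<notin> Y" and xI: "x \<in> I"
    using insert.prems by auto
  have IH: "span_ls P L (A \<union> D) \<inter> span_ls P L Y \<subseteq> span_ls P L A"
    using insert.IH[OF DY DI] .
  show ?case
  proof
    fix q assume q: "q \<in> span_ls P L (A \<union> insert x D) \<inter> span_ls P L Y"
    show "q \<in> span_ls P L A"
    proof (cases "q \<in> span_ls P L (A \<union> D)")
      case True
      then show ?thesis using IH q by blast
    next
      case False
      have xA: "x \<notin> A" using xY AY by blast
      have sub: "A \<union> D \<subseteq> I - {x}" using insert.hyps(2) xA AY YI DI by blast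
      have xn: "x \<notin> span_ls P L (A \<union> D)"
        using indep_notin[OF I xI] span_mono[OF sub, of P L] by blast
      have qP: "q \<in> P" using q span_subP[of P L "A \<union> insert x D"] by blast
      have xP: "x \<in> P" using xI IP by blast
      have ADP: "A \<union> D \<subseteq> P" using AY YI DI IP by blast
      have "A \<union> insert x D = A \<union> D \<union> {x}" by blast
      then have "q \<in> span_ls P L (A \<union> D \<union> {x})" using q by simp
      then have xs: "x \<in> span_ls P L (A \<union> D \<union> {q})"
        by (rule exch_rule[OF ex ADP xP xn qP False])
      have "Y \<subseteq> I - {x}" using YI xY by blast
      then have "q \<in> span_ls P L (I - {x})" using q span_mono[of Y "I - {x}" P L] by blast
      moreover have "A \<union> D \<subseteq> span_ls P L (I - {x})"
        using sub span_inc[of "I - {x}" P L] IP by blast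
      ultimately have "A \<union> D \<union> {q} \<subseteq> span_ls P L (I - {x})" by blast
      then have "span_ls P L (A \<union> D \<union> {q}) \<subseteq> span_ls P L (I - {x})"
        by (rule span_sub_span[OF ls])
      then have "x \<in> span_ls P L (I - {x})" using xs by blast
      then show ?thesis using indep_notin[OF I xI] by blast
    qed
  qed
qed

lemma span_inter:
  assumes ls: "linear_space P L" and ex: "exchange_axiom P L"
    and I: "independent_ls P L I" and "X \<subseteq> I" "Y \<subseteq> I"
  shows "span_ls P L X \<inter> span_ls P L Y = span_ls P L (X \<inter> Y)"
proof
  show "span_ls P L (X \<inter> Y) \<subseteq> span_ls P L X \<inter> span_ls P L Y"
    using span_mono[of "X \<inter> Y" X P L] span_mono[of "X \<inter> Y" Y P L] by blast
next
  have IP: "I \<subseteq> P" using I unfolding independent_ls_def by blast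
  show "span_ls P L X \<inter> span_ls P L Y \<subseteq> span_ls P L (X \<inter> Y)"
  proof
    fix q assume q: "q \<in> span_ls P L X \<inter> span_ls P L Y"
    obtain X0 where X0: "X0 \<subseteq> X" "finite X0" "q \<in> span_ls P L X0"
      using span_finitary[OF ls, of X q] q IP assms(4) by blast
    have "span_ls P L ((X0 \<inter> Y) \<union> (X0 - Y)) \<inter> span_ls P L Y \<subseteq> span_ls P L (X0 \<inter> Y)"
      by (rule inter_aux[OF ls ex I]) (use X0 assms in blast)+
    moreover have "(X0 \<inter> Y) \<union> (X0 - Y) = X0" by blast
    ultimately have "q \<in> span_ls P L (X0 \<inter> Y)" using q X0 by auto
    then show "q \<in> span_ls P L (X \<inter> Y)" using span_mono[of "X0 \<inter> Y" "X \<inter> Y" P L] X0 by blast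
  qed
qed

lemma span_family:
  assumes ls: "linear_space P L" and ex: "exchange_axiom P L"
    and I: "independent_ls P L I" and sp: "span_ls P L I = P" and fin: "finite F"
  shows "(\<forall>S\<in>F. \<exists>X\<subseteq>I. S = span_ls P L X) \<Longrightarrow>
    P \<inter> \<Inter>F = span_ls P L {x\<in>I. \<forall>S\<in>F. x \<in> S}"
  using fin
proof (induction F rule: finite_induct)
  case empty
  have "{x\<in>I. \<forall>S\<in>{}. x \<in> S} = I" by simp
  then show ?case using sp by simp
next
  case (insert S F)
  have allF: "\<forall>S\<in>F. \<exists>X\<subseteq>I. S = span_ls P L X" using insert.prems by simp
  obtain X where X: "X \<subseteq> I" "S = span_ls P L X" using insert.prems by auto
  define Z where "Z = {x\<in>I. \<forall>S\<in>F. x \<in> S}"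
  have IH: "P \<inter> \<Inter>F = span_ls P L Z" unfolding Z_def by (rule insert.IH[OF allF])
  have IP: "I \<subseteq> P" using I unfolding independent_ls_def by blast
  have SP: "S \<subseteq> P" using X(2) span_subP[of P L X] by simp
  have "P \<inter> \<Inter>(insert S F) = S \<inter> (P \<inter> \<Inter>F)" using SP by blast
  also have "\<dots> = span_ls P L X \<inter> span_ls P L Z" using IH X(2) by simp
  also have "\<dots> = span_ls P L (X \<inter> Z)"
    by (rule span_inter[OF ls ex I X(1)]) (simp add: Z_def)
  also have "X \<inter> Z = {x\<in>I. \<forall>S'\<in>insert S F. x \<in> S'}"
  proof -
    have XS: "x \<in> X \<longleftrightarrow> x \<in> S" if "x \<in> I" for x
    proof
      assume "x \<in> X" then show "x \<in> S" using X span_inc[of X P L] IP by blast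
    next
      assume "x \<in> S" then show "x \<in> X" using indep_mem[OF I X(1) that] X(2) by simp
    qed
    show ?thesis
    proof (rule set_eqI)
      fix x show "x \<in> X \<inter> Z \<longleftrightarrow> x \<in> {x\<in>I. \<forall>S'\<in>insert S F. x \<in> S'}"
        using XS[of x] X(1) unfolding Z_def by blast
    qed
  qed
  finally show ?case .
qed

lemma dim_lemma:
  assumes dP: "has_dim P L P n" and "I \<subseteq> P" "finite I" "span_ls P L I = P" "card I = n + 1"
    and "Y \<subseteq> I" "card Y = k + 1" and ls: "linear_space P L"
  shows "has_dim P L (span_ls P L Y) k"
  unfolding has_dim_def
proof (intro conjI exI allI impI)
  show "subspace P L (span_ls P L Y)" by (rule span_subspace[OF ls])
  show "Y \<subseteq> P" "finite Y" "card Y = k + 1" "span_ls P L Y = span_ls P L Y"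
    using assms finite_subset by auto
next
  fix X assume X: "X \<subseteq> P \<and> finite X \<and> span_ls P L X = span_ls P L Y"
  show "k + 1 \<le> card X"
  proof (rule ccontr)
    assume "\<not> k + 1 \<le> card X"
    define X' where "X' = X \<union> (I - Y)"
    have "I \<subseteq> span_ls P L X'"
    proof -
      have "Y \<subseteq> span_ls P L X" using X span_inc[of Y P L] assms by blast
      moreover have "span_ls P L X \<subseteq> span_ls P L X'" unfolding X'_def by (rule span_mono) blast
      moreover have "I - Y \<subseteq> span_ls P L X'" using span_inc[of X' P L] X assms unfolding X'_def by blast
      ultimately show ?thesis by blast
    qed
    then have "span_ls P L X' = P" using span_sub_span[OF ls, of I X'] span_subP[of P L X'] assms(4) by blast
    moreover have "X' \<subseteq> P" "finite X'" using X assms unfolding X'_def by auto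
    ultimately have "n + 1 \<le> card X'" using dP unfolding has_dim_def by blast
    moreover have "card X' \<le> card X + card (I - Y)" unfolding X'_def by (rule card_Un_le)
    moreover have "card (I - Y) = card I - card Y" using assms by (meson card_Diff_subset finite_subset)
    moreover have "card Y \<le> card I" using assms by (intro card_mono) auto
    ultimately show False using assms \<open>\<not> k + 1 \<le> card X\<close> by linarith
  qed
qed


theorem lemma2p2:
  fixes P :: "'p set" and L :: "'p set set" and n k :: nat and B :: "'p set"
    and R :: "'p set set"
  assumes "linear_space P L"
    and "has_dim P L P n"
    and "exchange_axiom P L"
    and "axiom_P2 L"
    and "0 < k" and "k < n - 1"
    and "base_ls P L B" and "finite B" and "card B = n + 1"
    and "R \<subseteq> base_subset P L k B"
  shows "exact P L k B R \<longleftrightarrow> (\<forall>p\<in>B. S_of P R p = {p})"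
proof -
  note ls = assms(1) and ex = assms(3)
  have BI: "independent_ls P L B" and Bsp: "span_ls P L B = P"
    using assms(7) unfolding base_ls_def by auto
  have BP: "B \<subseteq> P" using BI unfolding independent_ls_def by blast
  have finBS: "finite (base_subset P L k B')" if "finite B'" for B'
  proof -
    have "base_subset P L k B' \<subseteq> span_ls P L ` Pow B'" unfolding base_subset_def by blast
    then show ?thesis using that finite_subset by blast
  qed
  have finR: "finite R" using finBS[OF assms(8)] assms(10) finite_subset by blast
  show ?thesis
  proof
    assume exa: "exact P L k B R"
    show "\<forall>p\<in>B. S_of P R p = {p}"
    proof (rule ccontr)
      assume "\<not> (\<forall>p\<in>B. S_of P R p = {p})"
      then obtain p where pB: "p \<in> B" and pS: "S_of P R p \<noteq> {p}" by blast
      define F where "F = {S\<in>R. p \<in> S}"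
      define Z where "Z = {x\<in>B. \<forall>S\<in>F. x \<in> S}"
      have Rform: "\<forall>S\<in>R. \<exists>X\<subseteq>B. S = span_ls P L X" using assms(10) unfolding base_subset_def by blast
      have SZ: "S_of P R p = span_ls P L Z"
        unfolding S_of_def Z_def F_def[symmetric]
        by (rule span_family[OF ls ex BI Bsp]) (use finR Rform in \<open>auto simp: F_def\<close>)
      have pZ: "p \<in> Z" unfolding Z_def F_def using pB by blast
      have "Z \<noteq> {p}"
      proof
        assume "Z = {p}"
        then have "S_of P R p = {p}" using SZ span_single[of p P L] pB BP by auto
        then show False using pS by simp
      qed
      then obtain q where qZ: "q \<in> Z" and qp: "q \<noteq> p" using pZ by blast
      have qB: "q \<in> B" using qZ Z_def by blast
      have pP: "p \<in> P" and qP: "q \<in> P" using pB qB BP by auto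
      define l where "l = line_through L p q"
      have l: "l \<in> L" "p \<in> l" "q \<in> l" using lt_props[OF ls pP qP] qp unfolding l_def by auto
      obtain r where rl: "r \<in> l" and rp: "r \<noteq> p" and rq: "r \<noteq> q"
      proof -
        obtain a b c where "a \<in> l" "b \<in> l" "c \<in> l" "a \<noteq> b" "a \<noteq> c" "b \<noteq> c"
          using assms(4) l(1) unfolding axiom_P2_def by blast
        then show ?thesis using that by metis
      qed
      have lP: "l \<subseteq> P" using lt_subP[OF ls pP qP qp[symmetric]] unfolding l_def .
      have rP: "r \<in> P" using rl lP by blast
      have lpq: "l \<subseteq> span_ls P L {p, q}"
        using line_in_span[OF ls pP qP qp[symmetric]] unfolding l_def .
      have lrq: "l \<subseteq> span_ls P L {r, q}"
      proof -
        have "line_through L r q = l" using lt_eq[OF ls l(1) rl l(3) rq] .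
        then show ?thesis using line_in_span[OF ls rP qP rq] by simp
      qed
      have rB: "r \<notin> B"
      proof
        assume "r \<in> B"
        then have "r \<in> {p, q}" using indep_mem[OF BI, of "{p,q}" r] pB qB rl lpq by blast
        then show False using rp rq by blast
      qed
      have r_notin: "r \<notin> span_ls P L (B - {p})"
      proof
        assume "r \<in> span_ls P L (B - {p})"
        moreover have "q \<in> span_ls P L (B - {p})" using span_inc[of "B - {p}" P L] BP qB qp by blast
        ultimately have "span_ls P L {r, q} \<subseteq> span_ls P L (B - {p})" using span_sub_span[OF ls, of "{r,q}" "B - {p}"] by blast
        then have "p \<in> span_ls P L (B - {p})" using lrq l(2) by blast
        then show False using indep_notin[OF BI pB] by blast
      qed
      define B' where "B' = insert r (B - {p})"
      have B'P: "B' \<subseteq> P" unfolding B'_def using BP rP by blast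
      have B'sp: "span_ls P L B' = P"
      proof -
        have "{r, q} \<subseteq> B'" unfolding B'_def using qB qp by blast
        then have "p \<in> span_ls P L B'" using span_mono[of "{r,q}" B' P L] lrq l(2) by blast
        then have "B \<subseteq> span_ls P L B'" using span_inc[OF B'P, of L] unfolding B'_def by blast
        then show ?thesis using span_sub_span[OF ls, of B B'] Bsp span_subP[of P L B'] by blast
      qed
      have B'I: "independent_ls P L B'"
      proof (rule indep_intro[OF B'P])
        fix x assume xB': "x \<in> B'"
        show "x \<notin> span_ls P L (B' - {x})"
        proof (cases "x = r")
          case True
          then have "B' - {x} = B - {p}" unfolding B'_def using rB by blast
          then show ?thesis using r_notin True by simp
        next
          case False
          then have xB: "x \<in> B" and xp: "x \<noteq> p" using xB' unfolding B'_def by auto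
          define X where "X = B - {p, x}"
          have eq1: "B' - {x} = X \<union> {r}" unfolding B'_def X_def using False by blast
          have eq2: "X \<union> {x} = B - {p}" unfolding X_def using xB xp by blast
          have XP: "X \<subseteq> P" unfolding X_def using BP by blast
          have xn: "x \<notin> span_ls P L X"
            using indep_notin[OF BI xB] span_mono[of X "B - {x}" P L] unfolding X_def by blast
          have rn: "r \<notin> span_ls P L X"
            using r_notin span_mono[of X "B - {p}" P L] unfolding X_def by blast
          show ?thesis
          proof
            assume "x \<in> span_ls P L (B' - {x})"
            then have "x \<in> span_ls P L (X \<union> {r})" using eq1 by simp
            then have "r \<in> span_ls P L (X \<union> {x})"
              using exch_rule[OF ex XP rP rn _ xn] xB BP by blast
            then show False using eq2 r_notin by simp
          qed
        qed
      qed
      have B'base: "base_ls P L B'" unfolding base_ls_def using B'I B'sp by blast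
      have finB': "finite B'" unfolding B'_def using assms(8) by blast
      have cardB': "card B' = n + 1" unfolding B'_def using assms(8,9) rB pB
        by (simp add: card_Diff_singleton)
      have RB': "R \<subseteq> base_subset P L k B'"
      proof
        fix S assume SR: "S \<in> R"
        then have Sg: "S \<in> grass P L k" and "\<exists>X\<subseteq>B. S = span_ls P L X"
          using assms(10) unfolding base_subset_def by auto
        then obtain X where X: "X \<subseteq> B" "S = span_ls P L X" by blast
        show "S \<in> base_subset P L k B'"
        proof (cases "p \<in> X")
          case False
          then have "X \<subseteq> B'" using X unfolding B'_def by blast
          then show ?thesis unfolding base_subset_def using Sg X by blast
        next
          case True
          have XP: "X \<subseteq> P" using X BP by blast
          have "p \<in> S" using True X span_inc[OF XP] by blast
          then have "S \<in> F" unfolding F_def using SR by blast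
          then have "q \<in> S" using qZ unfolding Z_def by blast
          then have qX: "q \<in> X" using indep_mem[OF BI X(1) qB] X by blast
          define Y where "Y = insert r (X - {p})"
          have YB': "Y \<subseteq> B'" unfolding Y_def B'_def using X by blast
          have "Y \<subseteq> span_ls P L X"
          proof -
            have "span_ls P L {p,q} \<subseteq> span_ls P L X" using True qX by (intro span_mono) blast
            then show ?thesis unfolding Y_def using rl lpq span_inc[OF XP] by blast
          qed
          moreover have "X \<subseteq> span_ls P L Y"
          proof -
            have YP: "Y \<subseteq> P" using YB' B'P by blast
            have "span_ls P L {r,q} \<subseteq> span_ls P L Y" unfolding Y_def using qX qp by (intro span_mono) blast
            then have "p \<in> span_ls P L Y" using lrq l(2) by blast
            then show ?thesis using span_inc[OF YP] unfolding Y_def by blast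
          qed
          ultimately have "S = span_ls P L Y" using X span_sub_span[OF ls, of Y X] span_sub_span[OF ls, of X Y] by blast
          then show ?thesis unfolding base_subset_def using Sg YB' by blast
        qed
      qed
      obtain Z0 where Z0: "Z0 \<subseteq> B - {p, q}" "card Z0 = k"
      proof -
        have "card (B - {p, q}) = n - 1" using assms(8,9) pB qB qp by (simp add: card_Diff_subset)
        then have "k \<le> card (B - {p, q})" using assms(6) by simp
        then obtain Z0 where "Z0 \<subseteq> B - {p, q}" "card Z0 = k"
          by (meson obtain_subset_with_card_n)
        then show ?thesis by (rule that)
      qed
      define T where "T = span_ls P L (insert r Z0)"
      have Z0B': "insert r Z0 \<subseteq> B'" unfolding B'_def using Z0 by blast
      have finZ0: "finite Z0" using Z0(1) assms(8) by (meson finite_Diff finite_subset)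
      have cZ0: "card (insert r Z0) = k + 1" proof -
        have "r \<notin> Z0" using Z0(1) rB by blast
        then show ?thesis using finZ0 Z0(2) by simp
      qed
      have "has_dim P L T k" unfolding T_def
        by (rule dim_lemma[OF assms(2) B'P finB' B'sp cardB' Z0B' cZ0 ls])
      then have TB': "T \<in> base_subset P L k B'" unfolding base_subset_def grass_def T_def
        using Z0B' by blast
      have "T \<notin> base_subset P L k B"
      proof
        assume "T \<in> base_subset P L k B"
        then obtain W where W: "W \<subseteq> B" "T = span_ls P L W" unfolding base_subset_def by blast
        have "r \<in> T" unfolding T_def using span_inc[of "insert r Z0" P L] Z0B' B'P by blast
        then have "r \<in> span_ls P L W \<inter> span_ls P L {p,q}" using W rl lpq by blast
        then have rWpq: "r \<in> span_ls P L (W \<inter> {p,q})" using span_inter[OF ls ex BI W(1), of "{p,q}"] pB qB by blast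
        have "q \<in> W"
        proof (rule ccontr)
          assume "q \<notin> W"
          then have "W \<inter> {p,q} \<subseteq> {p}" by blast
          then have "r \<in> span_ls P L {p}" using rWpq span_mono[of "W \<inter> {p,q}" "{p}" P L] by blast
          then show False using span_single[OF pP] rp by blast
        qed
        then have "q \<in> T" using W span_inc[of W P L] BP by blast
        moreover have "insert r Z0 \<subseteq> B' - {q}" using Z0B' Z0 rq by blast
        ultimately have "q \<in> span_ls P L (B' - {q})" unfolding T_def using span_mono[of "insert r Z0" "B' - {q}" P L] by blast
        moreover have "q \<in> B'" unfolding B'_def using qB qp by blast
        ultimately show False using indep_notin[OF B'I] by blast
      qed
      then have "base_subset P L k B' \<noteq> base_subset P L k B" using TB' by blast
      then show False using exa B'base RB' unfolding exact_def by blast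
    qed
  next
    assume H: "\<forall>p\<in>B. S_of P R p = {p}"
    show "exact P L k B R" unfolding exact_def
    proof (intro conjI allI impI)
      show "R \<subseteq> base_subset P L k B" by fact
      fix B' assume B'base: "base_ls P L B'" and RB': "R \<subseteq> base_subset P L k B'"
      have B'I: "independent_ls P L B'" and B'sp: "span_ls P L B' = P"
        using B'base unfolding base_ls_def by auto
      have B'P: "B' \<subseteq> P" using B'I unfolding independent_ls_def by blast
      have "B \<subseteq> B'"
      proof
        fix p assume pB: "p \<in> B"
        define F where "F = {S\<in>R. p \<in> S}"
        define Z where "Z = {x\<in>B'. \<forall>S\<in>F. x \<in> S}"
        have Rform: "\<forall>S\<in>R. \<exists>X\<subseteq>B'. S = span_ls P L X" using RB' unfolding base_subset_def by blast
        have SZ: "S_of P R p = span_ls P L Z"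
          unfolding S_of_def Z_def F_def[symmetric]
          by (rule span_family[OF ls ex B'I B'sp]) (use finR Rform in \<open>auto simp: F_def\<close>)
        then have Zp: "span_ls P L Z = {p}" using H pB by simp
        have ZP: "Z \<subseteq> P" unfolding Z_def using B'P by blast
        have "Z \<noteq> {}" using Zp span_empty[of P L] by force
        moreover have "Z \<subseteq> {p}" using span_inc[OF ZP, of L] Zp by blast
        ultimately have "p \<in> Z" by blast
        then show "p \<in> B'" unfolding Z_def by blast
      qed
      have "B' = B"
      proof (rule ccontr)
        assume "B' \<noteq> B"
        then obtain x where x: "x \<in> B'" "x \<notin> B" using \<open>B \<subseteq> B'\<close> by blast
        then have "span_ls P L B \<subseteq> span_ls P L (B' - {x})" using \<open>B \<subseteq> B'\<close> by (intro span_mono) blast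
        then have "x \<in> span_ls P L (B' - {x})" using Bsp x B'P by blast
        then show False using indep_notin[OF B'I x(1)] by blast
      qed
      then show "base_subset P L k B' = base_subset P L k B" by simp
    qed
  qed
qed

end
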